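(* For every $l\in\mathbb N$, the closure of the complex curve $\Gamma_l=\{P_l(\lambda,\mu^2)=0\}$ in $\mathbb{CP}^2\supset\mathbb C^2_{(\lambda,\mu)}$ intersects the line at infinity exactly at the points $(\lambda:\mu:0)$ with $\lambda/\mu\in\{l-1,l-3,\dots,-(l-1)\}$; that is, the asymptotic directions of the branches of $\Gamma_l$ at infinity correspond to the ratios $\lambda/\mu=l-1,l-3,\dots,-(l-1)$. In particular, the closure of $\Gamma_l$ does not contain the point of intersection of the $\lambda$-axis with the line at infinity.
   Context: For $l\in\mathbb N$ and $\mu\in\mathbb C$, $H_l$ is the tridiagonal $l\times l$ matrix with entries $H_{l;jj}=(1-j)(l-j+1)$, $H_{l;j,j+1}=\mu j$, $H_{l;j,j-1}=\mu(l-j+1)$, and $H_{l;ij}=0$ if $|i-j|\geq 2$; $\det(H_l+\lambda\,\mathrm{Id})$ is a polynomial of degree $l$ in $(\lambda,\mu^2)$, written $P_l(\lambda,\mu^2)$. *)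

theory Defs
  imports "Jordan_Normal_Form.Determinant"
begin

text \<open>Entries of the tridiagonal matrix H_l (1-based indices i, j in 1..l).\<close>
definition H_entry :: "nat \<Rightarrow> complex \<Rightarrow> nat \<Rightarrow> nat \<Rightarrow> complex" where
  "H_entry l \<mu> i j =
     (if i = j then (1 - of_nat j) * (of_nat l - of_nat j + 1)
      else if j = i + 1 then \<mu> * of_nat i
      else if i = j + 1 then \<mu> * (of_nat l - of_nat i + 1)
      else 0)"

text \<open>H_l as an l x l matrix (JNF matrices are 0-based, hence the shift).\<close>
definition H_mat :: "nat \<Rightarrow> complex \<Rightarrow> complex mat" where
  "H_mat l \<mu> = mat l l (\<lambda>(i, j). H_entry l \<mu> (i + 1) (j + 1))"

text \<open>P_l(lambda, mu^2) = det(H_l + lambda Id); the affine curve Gamma_l in C^2.\<close>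
definition Gamma :: "nat \<Rightarrow> (complex \<times> complex) set" where
  "Gamma l = {(lam, mu). det (H_mat l mu + lam \<cdot>\<^sub>m 1\<^sub>m l) = 0}"

text \<open>The point (a:b:0) of the line at infinity of CP^2 lies in the closure of an affine
  set S in C^2: there is a sequence in S escaping to infinity whose direction tends to
  the complex line C(a,b).\<close>
definition in_closure_at_infinity :: "(complex \<times> complex) set \<Rightarrow> complex \<Rightarrow> complex \<Rightarrow> bool" where
  "in_closure_at_infinity S a b \<longleftrightarrow>
     (\<exists>x :: nat \<Rightarrow> complex \<times> complex.
        (\<forall>n. x n \<in> S) \<and>
        filterlim (\<lambda>n. cmod (fst (x n)) + cmod (snd (x n))) at_top sequentially \<and>
        ((\<lambda>n. (a * snd (x n) - b * fst (x n)) / of_real (cmod (fst (x n)) + cmod (snd (x n))))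
           \<longlonglongrightarrow> 0))"

end

theory Submission
  imports Defs "Jordan_Normal_Form.Char_Poly"
begin

lemma smult_pow_pred: "smult (of_nat m) (a * a ^ (m - 1)) = smult (of_nat m) (a ^ m :: complex poly)"
  by (cases m) auto

lemma kac_poly:
  fixes m q :: nat
  defines "p \<equiv> [:1,1:] ^ m * [:1,-1:] ^ q :: complex poly"
  shows "pderiv p - pCons 0 (pCons 0 (pderiv p)) + smult (of_nat (m+q)) (pCons 0 p)
         = smult (of_nat m - of_nat q) p"
proof -
  define a :: "complex poly" where "a = [:1,1:]"
  define b :: "complex poly" where "b = [:1,-1:]"
  have pd: "pderiv p = smult (of_nat m) (a ^ (m - 1)) * b ^ q - a ^ m * smult (of_nat q) (b ^ (q - 1))"
    unfolding p_def a_def b_def pderiv_mult pderiv_power by (simp add: pderiv_pCons algebra_simps)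
  have e1: "x - pCons 0 (pCons 0 x) = [:1,1:] * [:1,-1:] * x" for x :: "complex poly"
    by (simp add: algebra_simps)
  have "pderiv p - pCons 0 (pCons 0 (pderiv p)) = a * b * pderiv p"
    unfolding e1 a_def b_def ..
  also have "\<dots> = smult (of_nat m) (a * a ^ (m - 1)) * b ^ q * b - a ^ m * a * smult (of_nat q) (b * b ^ (q - 1))"
    unfolding pd by (simp add: algebra_simps)
  also have "\<dots> = smult (of_nat m) (a ^ m) * b ^ q * b - a ^ m * a * smult (of_nat q) (b ^ q)"
    using smult_pow_pred[of m a] smult_pow_pred[of q b] by simp
  finally have h: "pderiv p - pCons 0 (pCons 0 (pderiv p)) = 
     smult (of_nat m) (a ^ m) * b ^ q * b - a ^ m * a * smult (of_nat q) (b ^ q)" .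
  have pc: "pCons 0 p = [:0,1:] * p" by simp
  show ?thesis unfolding h pc unfolding p_def a_def[symmetric] b_def[symmetric]
    by (simp add: a_def b_def poly_eq_poly_eq_iff[symmetric] fun_eq_iff algebra_simps)
qed

definition Amat :: "nat \<Rightarrow> complex mat" where
  "Amat l = mat l l (\<lambda>(i,j). if j = i+1 then of_nat (i+1) else if i = j+1 then of_nat l - of_nat i else 0)"

lemma Amat_carrier[simp]: "Amat l \<in> carrier_mat l l" by (simp add: Amat_def)
lemma Amat_dim[simp]: "dim_row (Amat l) = l" "dim_col (Amat l) = l" by (simp_all add: Amat_def)

lemma kac_coeff:
  fixes m q :: nat
  defines "p \<equiv> [:1,1:] ^ m * [:1,-1:] ^ q :: complex poly"
  shows "of_nat (i+1) * coeff p (i+1) + (if 0 < i then (of_nat (m+q+1) - of_nat i) * coeff p (i - 1) else 0)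
         = (of_nat m - of_nat q) * coeff p i"
proof -
  have "coeff (pderiv p - pCons 0 (pCons 0 (pderiv p)) + smult (of_nat (m+q)) (pCons 0 p)) i
       = coeff (smult (of_nat m - of_nat q) p) i" unfolding p_def kac_poly ..
  then show ?thesis
    by (cases i; cases "i - 1") (auto simp: coeff_pderiv coeff_pCons algebra_simps)
qed

lemma kac_eigvec:
  assumes kl: "k < l"
  defines "p \<equiv> [:1,1:] ^ k * [:1,-1:] ^ (l-1-k) :: complex poly"
  shows "Amat l *\<^sub>v vec l (\<lambda>j. coeff p j) = (of_nat k - of_nat (l-1-k)) \<cdot>\<^sub>v vec l (\<lambda>j. coeff p j)"
proof (rule eq_vecI)
  show "dim_vec (Amat l *\<^sub>v vec l (\<lambda>j. coeff p j)) = dim_vec ((of_nat k - of_nat (l-1-k)) \<cdot>\<^sub>v vec l (\<lambda>j. coeff p j))"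
    by (simp add: Amat_def)
  fix i assume "i < dim_vec ((of_nat k - of_nat (l-1-k)) \<cdot>\<^sub>v vec l (\<lambda>j. coeff p j))"
  then have il: "i < l" by simp
  have deg: "degree p \<le> l - 1"
  proof -
    have "degree p \<le> degree ([:1,1:] ^ k :: complex poly) + degree ([:1,-1:] ^ (l-1-k) :: complex poly)"
      unfolding p_def by (rule degree_mult_le)
    also have "\<dots> \<le> k + (l-1-k)" by (intro add_mono degree_power_le[THEN order_trans]) auto
    finally show ?thesis using kl by simp
  qed
  have cl: "coeff p l = 0" using deg kl by (intro coeff_eq_0) auto
  have e: "k + (l - 1 - k) + 1 = l" using kl by simp
  have cl': "\<not> i + 1 < l \<Longrightarrow> coeff p (Suc i) = 0" using cl il
    by (metis Suc_eq_plus1 Suc_lessI)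
  have "(Amat l *\<^sub>v vec l (\<lambda>j. coeff p j)) $ i =
     (\<Sum>j = 0..<l. (if j = i+1 then of_nat (i+1) else if i = j+1 then of_nat l - of_nat i else 0) * coeff p j)"
    using il by (simp add: Amat_def scalar_prod_def)
  also have "\<dots> = (\<Sum>j = 0..<l. (if j = i+1 then of_nat (i+1) * coeff p j else 0))
      + (\<Sum>j = 0..<l. (if j = i - 1 \<and> 0 < i then (of_nat l - of_nat i) * coeff p j else 0))"
    unfolding sum.distrib[symmetric] by (rule sum.cong) auto
  also have "\<dots> = of_nat (i+1) * coeff p (i+1) + (if 0 < i then (of_nat l - of_nat i) * coeff p (i - 1) else 0)"
    using il cl' by (cases "i + 1 < l") (auto simp: sum.delta' intro!: sum.neutral)
  also have "\<dots> = (of_nat k - of_nat (l-1-k)) * coeff p i"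
    using kac_coeff[of i k "l-1-k", unfolded e] unfolding p_def .
  finally show "(Amat l *\<^sub>v vec l (\<lambda>j. coeff p j)) $ i = ((of_nat k - of_nat (l-1-k)) \<cdot>\<^sub>v vec l (\<lambda>j. coeff p j)) $ i"
    using il by simp
qed


definition cK :: "nat \<Rightarrow> nat \<Rightarrow> complex" where
  "cK l k = of_int (int l - 1 - 2 * int k)"

lemma kac_eigenvalue:
  assumes kl: "k < l"
  shows "eigenvalue (- Amat l) (cK l k)"
proof -
  define p :: "complex poly" where "p = [:1,1:] ^ k * [:1,-1:] ^ (l-1-k)"
  define v where "v = vec l (\<lambda>j. coeff p j)"
  have Av: "Amat l *\<^sub>v v = (of_nat k - of_nat (l-1-k)) \<cdot>\<^sub>v v"
    unfolding v_def p_def by (rule kac_eigvec[OF kl])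
  have ev: "cK l k = - (of_nat k - of_nat (l-1-k))"
    using kl by (simp add: cK_def of_nat_diff)
  have "(- Amat l) *\<^sub>v v = cK l k \<cdot>\<^sub>v v"
  proof (rule eq_vecI)
    fix i assume "i < dim_vec (cK l k \<cdot>\<^sub>v v)"
    then have il: "i < l" by (simp add: v_def)
    have "((- Amat l) *\<^sub>v v) $ i = - ((Amat l *\<^sub>v v) $ i)"
      using il by (simp add: Amat_def v_def scalar_prod_def sum_negf[symmetric])
    also have "\<dots> = (cK l k \<cdot>\<^sub>v v) $ i" unfolding Av ev using il by (simp add: v_def algebra_simps)
    finally show "((- Amat l) *\<^sub>v v) $ i = (cK l k \<cdot>\<^sub>v v) $ i" .
  qed (simp add: v_def Amat_def)
  moreover have "v \<noteq> 0\<^sub>v l"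
  proof
    assume "v = 0\<^sub>v l"
    then have "v $ 0 = 0" using kl by simp
    moreover have "v $ 0 = 1" using kl by (simp add: v_def p_def poly_0_coeff_0[symmetric])
    ultimately show False by simp
  qed
  ultimately show ?thesis unfolding eigenvalue_def eigenvector_def
    by (intro exI[of _ v]) (simp add: v_def Amat_def)
qed

lemma kac_det: "det (t \<cdot>\<^sub>m 1\<^sub>m l + Amat l) = (\<Prod>k<l. t - cK l k)"
proof -
  have mA: "- Amat l \<in> carrier_mat l l" by simp
  obtain as where cp: "char_poly (- Amat l) = (\<Prod>a\<leftarrow>as. [:- a, 1:])" and len: "length as = l"
    using char_poly_factorized[OF mA] by blast
  have pe: "poly (char_poly (- Amat l)) x = (\<Prod>a\<leftarrow>as. x - a)" for x
    unfolding cp by (induct as) (auto simp: algebra_simps)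
  have sub: "cK l ` {..<l} \<subseteq> set as"
  proof
    fix c assume "c \<in> cK l ` {..<l}"
    then obtain k where kl: "k < l" and c: "c = cK l k" by auto
    have "poly (char_poly (- Amat l)) c = 0"
      using kac_eigenvalue[OF kl] eigenvalue_root_char_poly[OF mA] c by simp
    then show "c \<in> set as" unfolding pe by (induct as) auto
  qed
  have inj: "inj_on (cK l) {..<l}" by (auto simp: inj_on_def cK_def)
  have cardC: "card (cK l ` {..<l}) = l" using card_image[OF inj] by simp
  have "card (set as) \<le> l" using len card_length by metis
  then have eqs: "cK l ` {..<l} = set as"
    using sub cardC by (metis card_seteq List.finite_set)
  then have "card (set as) = length as" using cardC len by simp
  then have dist: "distinct as" by (rule card_distinct)
  have "det (t \<cdot>\<^sub>m 1\<^sub>m l + Amat l) = poly (char_poly (- Amat l)) t"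
  proof -
    have "- char_matrix (- Amat l) t = t \<cdot>\<^sub>m 1\<^sub>m l + Amat l"
      by (rule eq_matI) (auto simp: char_matrix_def Amat_def)
    then show ?thesis using char_poly_matrix[OF mA, of t] by simp
  qed
  also have "\<dots> = (\<Prod>a\<leftarrow>as. t - a)" by (rule pe)
  also have "\<dots> = (\<Prod>a\<in>set as. t - a)" using dist by (simp add: prod.distinct_set_conv_list)
  also have "\<dots> = (\<Prod>a\<in>cK l ` {..<l}. t - a)" unfolding eqs ..
  also have "\<dots> = (\<Prod>k<l. t - cK l k)" using inj by (simp add: prod.reindex)
  finally show ?thesis .
qed


definition Dmat :: "nat \<Rightarrow> complex mat" where
  "Dmat l = mat l l (\<lambda>(i,j). if i = j then (1 - of_nat (j+1)) * (of_nat l - of_nat (j+1) + 1) else 0)"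

definition Fm :: "nat \<Rightarrow> complex \<Rightarrow> complex \<Rightarrow> complex mat" where
  "Fm l lam mu = lam \<cdot>\<^sub>m 1\<^sub>m l + mu \<cdot>\<^sub>m Amat l"

lemma H_decomp: "H_mat l mu + lam \<cdot>\<^sub>m 1\<^sub>m l = Fm l lam mu + Dmat l"
  by (rule eq_matI) (auto simp: H_mat_def H_entry_def Fm_def Dmat_def Amat_def algebra_simps)

lemma F_prod: "det (Fm l lam mu) = (\<Prod>k<l. lam - cK l k * mu)"
proof (cases "mu = 0")
  case True
  have "Fm l lam mu = lam \<cdot>\<^sub>m 1\<^sub>m l"
    using True by (intro eq_matI) (auto simp: Fm_def Amat_def)
  then show ?thesis using True by simp
next
  case False
  have "Fm l lam mu = mu \<cdot>\<^sub>m ((lam / mu) \<cdot>\<^sub>m 1\<^sub>m l + Amat l)"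
    using False by (intro eq_matI) (auto simp: Fm_def Amat_def algebra_simps)
  then have "det (Fm l lam mu) = mu ^ l * (\<Prod>k<l. lam / mu - cK l k)"
    by (simp add: kac_det)
  also have "\<dots> = (\<Prod>k<l. mu * (lam / mu - cK l k))"
    by (simp add: prod.distrib)
  also have "\<dots> = (\<Prod>k<l. lam - cK l k * mu)"
    using False by (intro prod.cong) (auto simp: field_simps)
  finally show ?thesis .
qed

lemma prod_diff_bound:
  fixes x d :: "nat \<Rightarrow> complex"
  assumes "\<And>i. i < n \<Longrightarrow> norm (x i) \<le> K * N" "\<And>i. i < n \<Longrightarrow> norm (d i) \<le> K" "0 \<le> K" "0 \<le> N"
  shows "norm ((\<Prod>i=0..<n. x i + d i) - (\<Prod>i=0..<n. x i)) \<le> of_nat n * K * (K*N + K)^(n-1)"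
  using assms(1,2)
proof (induct n)
  case 0
  then show ?case by simp
next
  case (Suc n)
  define A where "A = (\<Prod>i=0..<n. x i + d i)"
  define B where "B = (\<Prod>i=0..<n. x i)"
  have IH: "norm (A - B) \<le> of_nat n * K * (K*N + K)^(n-1)"
    unfolding A_def B_def using Suc by auto
  have xn: "norm (x n) \<le> K * N" and dn: "norm (d n) \<le> K" using Suc by auto
  have KN: "0 \<le> K * N" using assms by simp
  have nB: "norm B \<le> (K*N)^n"
  proof -
    have "norm B = (\<Prod>i=0..<n. norm (x i))" unfolding B_def prod_norm ..
    also have "\<dots> \<le> (\<Prod>i=0..<n. K * N)"
      by (rule prod_mono) (use Suc(2) in auto)
    finally show ?thesis by simp
  qed
  have "(\<Prod>i=0..<Suc n. x i + d i) - (\<Prod>i=0..<Suc n. x i) = (x n + d n) * (A - B) + d n * B"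
    unfolding A_def B_def by (simp add: algebra_simps)
  then have "norm ((\<Prod>i=0..<Suc n. x i + d i) - (\<Prod>i=0..<Suc n. x i)) \<le> norm (x n + d n) * norm (A - B) + norm (d n) * norm B"
    by (metis norm_mult norm_triangle_ineq)
  also have "\<dots> \<le> (K*N + K) * (of_nat n * K * (K*N + K)^(n-1)) + K * (K*N)^n"
  proof (rule add_mono)
    have "norm (x n + d n) \<le> K*N + K"
      using norm_triangle_ineq[of "x n" "d n"] xn dn by simp
    then show "norm (x n + d n) * norm (A - B) \<le> (K*N + K) * (of_nat n * K * (K*N + K)^(n-1))"
      using IH KN assms by (intro mult_mono) auto
    show "norm (d n) * norm B \<le> K * (K*N)^n"
      using dn nB assms by (intro mult_mono) auto
  qed
  also have "(K*N + K) * (of_nat n * K * (K*N + K)^(n-1)) = of_nat n * K * (K*N+K)^n"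
    by (cases n) (auto simp: algebra_simps)
  also have "K * (K*N)^n \<le> K * (K*N+K)^n"
    using assms KN by (intro mult_left_mono power_mono) auto
  finally show ?case by (simp add: algebra_simps)
qed

lemma norm_signof: "norm (signof p :: complex) = 1"
  by (simp add: sign_def)

lemma det_diff_bound:
  fixes X D :: "complex mat"
  assumes X: "X \<in> carrier_mat n n" and D: "D \<in> carrier_mat n n"
    and bX: "\<And>i j. i < n \<Longrightarrow> j < n \<Longrightarrow> norm (X $$ (i,j)) \<le> K * N"
    and bD: "\<And>i j. i < n \<Longrightarrow> j < n \<Longrightarrow> norm (D $$ (i,j)) \<le> K"
    and K: "0 \<le> K" and N: "0 \<le> N"
  shows "norm (det (X + D) - det X) \<le> fact n * (of_nat n * K * (K*N + K)^(n-1))"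
proof -
  let ?P = "{p. p permutes {0..<n}}"
  have XD: "X + D \<in> carrier_mat n n" using X D by simp
  have eq: "det (X + D) - det X = (\<Sum>p\<in>?P. signof p * ((\<Prod>i=0..<n. X $$ (i, p i) + D $$ (i, p i)) - (\<Prod>i=0..<n. X $$ (i, p i))))"
  proof -
    have "det (X + D) = (\<Sum>p\<in>?P. signof p * (\<Prod>i=0..<n. X $$ (i, p i) + D $$ (i, p i)))"
      unfolding det_def'[OF XD]
    proof (rule sum.cong[OF refl])
      fix p assume p: "p \<in> ?P"
      have "(\<Prod>i=0..<n. (X + D) $$ (i, p i)) = (\<Prod>i=0..<n. X $$ (i, p i) + D $$ (i, p i))"
      proof (rule prod.cong[OF refl])
        fix i assume i: "i \<in> {0..<n}"
        then have "p i < n" using p by (auto dest: permutes_in_image)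
        then show "(X + D) $$ (i, p i) = X $$ (i, p i) + D $$ (i, p i)" using X D i by auto
      qed
      then show "signof p * (\<Prod>i=0..<n. (X + D) $$ (i, p i)) = signof p * (\<Prod>i=0..<n. X $$ (i, p i) + D $$ (i, p i))"
        by simp
    qed
    then show ?thesis unfolding det_def'[OF X] by (simp add: sum_subtractf algebra_simps)
  qed
  have "norm (det (X + D) - det X) \<le> (\<Sum>p\<in>?P. norm (signof p * ((\<Prod>i=0..<n. X $$ (i, p i) + D $$ (i, p i)) - (\<Prod>i=0..<n. X $$ (i, p i)))))"
    unfolding eq by (rule norm_sum)
  also have "\<dots> \<le> (\<Sum>p\<in>?P. of_nat n * K * (K*N + K)^(n-1))"
  proof (rule sum_mono)
    fix p assume p: "p \<in> ?P"
    have pi: "i < n \<Longrightarrow> p i < n" for i using p by (auto dest: permutes_in_image)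
    show "norm (signof p * ((\<Prod>i=0..<n. X $$ (i, p i) + D $$ (i, p i)) - (\<Prod>i=0..<n. X $$ (i, p i)))) \<le> of_nat n * K * (K*N + K)^(n-1)"
    proof -
      have pd: "norm ((\<Prod>i=0..<n. X $$ (i, p i) + D $$ (i, p i)) - (\<Prod>i=0..<n. X $$ (i, p i))) \<le> of_nat n * K * (K*N + K)^(n-1)"
        by (rule prod_diff_bound) (use pi bX bD K N in auto)
      show ?thesis by (simp only: norm_mult norm_signof mult_1) (rule pd)
    qed
  qed
  also have "\<dots> = fact n * (of_nat n * K * (K*N + K)^(n-1))"
  proof -
    have "card ?P = fact n" using card_permutations[of "{0..<n}" n] by simp
    then show ?thesis by simp
  qed
  finally show ?thesis .
qed

lemma Amat_entry_bound:
  assumes "i < l" "j < l" shows "norm (Amat l $$ (i,j)) \<le> real l"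
proof -
  have "norm (of_nat l - of_nat i :: complex) = real (l - i)"
    using assms by (simp add: of_nat_diff[symmetric] del: of_nat_diff)
  moreover have "norm (1 + of_nat i :: complex) = real (Suc i)"
    by (metis norm_of_nat of_nat_Suc)
  ultimately show ?thesis using assms by (auto simp: Amat_def)
qed

definition KK :: "nat \<Rightarrow> real" where "KK l = (real l + 1)^2"
definition CP :: "nat \<Rightarrow> real" where "CP l = fact l * (real l * KK l * (2 * KK l)^(l-1))"

lemma KK_ge: "real l + 1 \<le> KK l" "0 \<le> KK l"
proof -
  have "(real l + 1) * 1 \<le> (real l + 1) * (real l + 1)" by (intro mult_left_mono) auto
  then show "real l + 1 \<le> KK l" by (simp add: KK_def power2_eq_square)
  show "0 \<le> KK l" by (simp add: KK_def)
qed

lemma CP_nonneg: "0 \<le> CP l"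
  using KK_ge(2)[of l] by (simp add: CP_def)

lemma P_bound:
  assumes N1: "1 \<le> norm lam + norm mu"
  shows "norm (det (H_mat l mu + lam \<cdot>\<^sub>m 1\<^sub>m l) - (\<Prod>k<l. lam - cK l k * mu))
         \<le> CP l * (norm lam + norm mu)^(l-1)"
proof -
  define N where "N = norm lam + norm mu"
  define K where "K = KK l"
  have K0: "0 \<le> K" and Kl: "real l + 1 \<le> K" using KK_ge unfolding K_def by auto
  have N0: "0 \<le> N" unfolding N_def by simp
  have bX: "norm (Fm l lam mu $$ (i,j)) \<le> K * N" if ij: "i < l" "j < l" for i j
  proof -
    have fe: "Fm l lam mu $$ (i,j) = (if i = j then lam else 0) + mu * Amat l $$ (i,j)"
      using ij by (simp add: Fm_def Amat_def)
    have "norm (Fm l lam mu $$ (i,j)) \<le> norm lam + norm mu * real l"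
    proof -
      have a: "norm (if i = j then lam else 0) \<le> norm lam" by simp
      have b: "norm (mu * Amat l $$ (i,j)) \<le> norm mu * real l"
        unfolding norm_mult using Amat_entry_bound[OF ij] by (intro mult_left_mono) auto
      show ?thesis unfolding fe using norm_triangle_ineq[of "if i = j then lam else 0" "mu * Amat l $$ (i,j)"] a b
        by linarith
    qed
    also have "\<dots> \<le> (real l + 1) * N" unfolding N_def
      by (simp add: algebra_simps mult_right_mono)
    also have "\<dots> \<le> K * N" using Kl N0 by (intro mult_right_mono) auto
    finally show ?thesis .
  qed
  have bD: "norm (Dmat l $$ (i,j)) \<le> K" if ij: "i < l" "j < l" for i j
  proof (cases "i = j")
    case True
    have e: "Dmat l $$ (i,j) = - (of_nat j * of_nat (l - j))"
      using ij True by (simp add: Dmat_def of_nat_diff algebra_simps)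
    have "norm (Dmat l $$ (i,j)) = real j * real (l - j)"
      unfolding e by (simp only: norm_minus_cancel norm_mult norm_of_nat)
    also have "\<dots> \<le> (real l + 1) * (real l + 1)" using ij by (intro mult_mono) auto
    also have "\<dots> = KK l" by (simp add: KK_def power2_eq_square)
    finally show ?thesis unfolding K_def .
  qed (use ij K0 in \<open>simp add: Dmat_def\<close>)
  have "norm (det (Fm l lam mu + Dmat l) - det (Fm l lam mu)) \<le> fact l * (of_nat l * K * (K*N + K)^(l-1))"
    by (rule det_diff_bound[OF _ _ bX bD K0 N0]) (auto simp: Fm_def Dmat_def)
  also have "(K*N + K)^(l-1) \<le> (2*K)^(l-1) * N^(l-1)"
  proof -
    have "K * 1 \<le> K * N" using N1 K0 unfolding N_def by (intro mult_left_mono) auto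
    then have "K*N + K \<le> 2*K*N" by simp
    then have "(K*N + K)^(l-1) \<le> (2*K*N)^(l-1)" using K0 N0 by (intro power_mono) auto
    then show ?thesis by (simp add: power_mult_distrib)
  qed
  then have "fact l * (of_nat l * K * (K*N + K)^(l-1)) \<le> fact l * (of_nat l * K * ((2*K)^(l-1) * N^(l-1)))"
    using K0 by (intro mult_left_mono) auto
  finally show ?thesis
    unfolding H_decomp F_prod[symmetric] by (simp add: CP_def K_def N_def algebra_simps)
qed

lemma F_zero_iff:
  assumes "(a, b) \<noteq> (0, 0)"
  shows "(\<Prod>k<l. a - cK l k * b) = 0 \<longleftrightarrow> b \<noteq> 0 \<and> (\<exists>k<l. a / b = cK l k)"
proof (cases "b = 0")
  case True
  then have "a \<noteq> 0" using assms by auto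
  then show ?thesis using True by simp
next
  case False
  have "a - cK l k * b = 0 \<longleftrightarrow> a / b = cK l k" for k
    using False by (auto simp: field_simps)
  then show ?thesis using False by (auto simp: lessThan_iff)
qed

lemma prod_list_norm: "norm (prod_list (map g xs) :: complex) = prod_list (map (\<lambda>x. norm (g x)) xs)"
  by (induct xs) (auto simp: norm_mult)

lemma prod_list_lower:
  fixes f :: "'a \<Rightarrow> real"
  assumes "\<forall>x\<in>set xs. m \<le> f x" "0 \<le> m"
  shows "m ^ length xs \<le> prod_list (map f xs)"
  using assms
proof (induct xs)
  case (Cons y ys)
  then have "m * m ^ length ys \<le> f y * prod_list (map f ys)"
    by (intro mult_mono) auto
  then show ?case by simp
qed simp

lemma prod_list_min:
  fixes f :: "'a \<Rightarrow> real"
  assumes "xs \<noteq> []" "\<And>x. 0 \<le> f x"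
  shows "\<exists>x\<in>set xs. f x ^ length xs \<le> prod_list (map f xs)"
proof -
  define m where "m = Min (f ` set xs)"
  have "m \<in> f ` set xs" unfolding m_def using assms(1) by (intro Min_in) auto
  then obtain x where x: "x \<in> set xs" "m = f x" by auto
  have "\<forall>y\<in>set xs. m \<le> f y" unfolding m_def by auto
  then have "m ^ length xs \<le> prod_list (map f xs)"
    using assms(2) x by (intro prod_list_lower) auto
  then show ?thesis using x by auto
qed

lemma H_carrier[simp]: "H_mat l mu \<in> carrier_mat l l"
  by (simp add: H_mat_def)

lemma det_H_factor:
  "\<exists>rs. length rs = l \<and> (\<forall>t. det (H_mat l mu + t \<cdot>\<^sub>m 1\<^sub>m l) = (\<Prod>r\<leftarrow>rs. t - r))"
proof -
  have mA: "- H_mat l mu \<in> carrier_mat l l" by simp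
  obtain as where cp: "char_poly (- H_mat l mu) = (\<Prod>a\<leftarrow>as. [:- a, 1:])" and len: "length as = l"
    using char_poly_factorized[OF mA] by blast
  have pe: "poly (char_poly (- H_mat l mu)) x = (\<Prod>a\<leftarrow>as. x - a)" for x
    unfolding cp by (induct as) (auto simp: algebra_simps)
  have "det (H_mat l mu + t \<cdot>\<^sub>m 1\<^sub>m l) = (\<Prod>a\<leftarrow>as. t - a)" for t
  proof -
    have "- char_matrix (- H_mat l mu) t = H_mat l mu + t \<cdot>\<^sub>m 1\<^sub>m l"
      by (rule eq_matI) (auto simp: char_matrix_def H_mat_def)
    then show ?thesis using char_poly_matrix[OF mA, of t] pe by simp
  qed
  then show ?thesis using len by blast
qed

lemma lin_bound:
  fixes a b c lam mu :: complex
  assumes "norm (a*mu - b*lam) \<le> e"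
  shows "norm (a - c*b) * (norm lam + norm mu) \<le> (norm a + norm b) * norm (lam - c*mu) + (norm c + 1) * e"
proof -
  have e1: "(a - c*b) * lam = a * (lam - c*mu) + c * (a*mu - b*lam)" by (simp add: algebra_simps)
  have e2: "(a - c*b) * mu = b * (lam - c*mu) + (a*mu - b*lam)" by (simp add: algebra_simps)
  have n1: "norm (a - c*b) * norm lam \<le> norm a * norm (lam - c*mu) + norm c * e"
  proof -
    have "norm (a - c*b) * norm lam = norm (a * (lam - c*mu) + c * (a*mu - b*lam))"
      by (simp only: e1[symmetric] norm_mult)
    also have "\<dots> \<le> norm a * norm (lam - c*mu) + norm c * norm (a*mu - b*lam)"
      by (metis norm_mult norm_triangle_ineq)
    also have "\<dots> \<le> norm a * norm (lam - c*mu) + norm c * e"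
      using assms by (intro add_left_mono mult_left_mono) auto
    finally show ?thesis .
  qed
  have n2: "norm (a - c*b) * norm mu \<le> norm b * norm (lam - c*mu) + e"
  proof -
    have "norm (a - c*b) * norm mu = norm (b * (lam - c*mu) + (a*mu - b*lam))"
      by (simp only: e2[symmetric] norm_mult)
    also have "\<dots> \<le> norm b * norm (lam - c*mu) + norm (a*mu - b*lam)"
      by (metis norm_mult norm_triangle_ineq)
    also have "\<dots> \<le> norm b * norm (lam - c*mu) + e"
      using assms by simp
    finally show ?thesis .
  qed
  show ?thesis using n1 n2 by (simp add: algebra_simps)
qed

lemma CP_zero: "CP 0 = 0" by (simp add: CP_def)

lemma necessity:
  assumes ab: "(a, b) \<noteq> (0, 0)" and cl: "in_closure_at_infinity (Gamma l) a b"
  shows "(\<Prod>k<l. a - cK l k * b) = 0"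
proof (rule ccontr)
  assume nz: "(\<Prod>k<l. a - cK l k * b) \<noteq> 0"
  then have Dk: "a - cK l k * b \<noteq> 0" if "k < l" for k using that by auto
  obtain x where xG: "\<And>n. x n \<in> Gamma l"
    and lim_at: "filterlim (\<lambda>n. cmod (fst (x n)) + cmod (snd (x n))) at_top sequentially"
    and lim0: "((\<lambda>n. (a * snd (x n) - b * fst (x n)) / of_real (cmod (fst (x n)) + cmod (snd (x n)))) \<longlonglongrightarrow> 0)"
    using cl unfolding in_closure_at_infinity_def by blast
  define lam where "lam n = fst (x n)" for n
  define mu where "mu n = snd (x n)" for n
  define N where "N n = norm (lam n) + norm (mu n)" for n
  define E where "E n = a * mu n - b * lam n" for n
  define S where "S = norm a + norm b"
  have S0: "0 < S" using ab unfolding S_def by (auto simp: add_pos_nonneg add_nonneg_pos)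
  define \<delta> where "\<delta> k = norm (a - cK l k * b) / (2 * S)" for k
  define \<epsilon> where "\<epsilon> k = norm (a - cK l k * b) / (2 * (norm (cK l k) + 1))" for k
  have \<delta>0: "0 < \<delta> k" if "k < l" for k using Dk[OF that] S0 unfolding \<delta>_def by auto
  have \<epsilon>0: "0 < \<epsilon> k" if "k < l" for k using Dk[OF that] unfolding \<epsilon>_def
    by (auto intro!: divide_pos_pos add_nonneg_pos)
  define P where "P = (\<Prod>k<l. \<delta> k)"
  have P0: "0 < P" unfolding P_def using \<delta>0 by (intro prod_pos) auto
  have det0: "det (H_mat l (mu n) + lam n \<cdot>\<^sub>m 1\<^sub>m l) = 0" for n
    using xG[of n] unfolding Gamma_def lam_def mu_def by (cases "x n") auto
  have evN: "\<forall>\<^sub>F n in sequentially. max 1 (CP l / P + 1) \<le> N n"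
    using lim_at unfolding filterlim_at_top N_def lam_def mu_def by blast
  have evE: "\<forall>\<^sub>F n in sequentially. \<forall>k\<in>{..<l}. norm (E n / of_real (N n)) < \<epsilon> k"
  proof (rule eventually_ball_finite)
    show "\<forall>k\<in>{..<l}. \<forall>\<^sub>F n in sequentially. norm (E n / of_real (N n)) < \<epsilon> k"
    proof
      fix k assume "k \<in> {..<l}"
      then have "0 < \<epsilon> k" using \<epsilon>0 by auto
      from tendstoD[OF lim0 this] show "\<forall>\<^sub>F n in sequentially. norm (E n / of_real (N n)) < \<epsilon> k"
        unfolding E_def N_def lam_def mu_def by (simp add: dist_norm)
    qed
  qed simp
  from eventually_conj[OF evN evE] obtain n where
    hN: "max 1 (CP l / P + 1) \<le> N n" and hE: "\<forall>k\<in>{..<l}. norm (E n / of_real (N n)) < \<epsilon> k"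
    unfolding eventually_sequentially by blast
  have N1: "1 \<le> N n" using hN by simp
  have Npos: "0 < N n" using N1 by simp
  have low: "\<delta> k * N n \<le> norm (lam n - cK l k * mu n)" if k: "k < l" for k
  proof -
    have "norm (E n) / N n < \<epsilon> k" using hE k Npos by (simp add: norm_divide)
    then have Ek: "norm (E n) \<le> \<epsilon> k * N n" using Npos by (simp add: divide_less_eq)
    have "norm (a - cK l k * b) * N n \<le> S * norm (lam n - cK l k * mu n) + (norm (cK l k) + 1) * (\<epsilon> k * N n)"
      using lin_bound[of a "mu n" b "lam n" "\<epsilon> k * N n" "cK l k"] Ek
      unfolding E_def N_def S_def by simp
    also have "(norm (cK l k) + 1) * (\<epsilon> k * N n) = norm (a - cK l k * b) * N n / 2"
    proof -
      have cpos: "norm (cK l k) + 1 \<noteq> 0" using norm_ge_zero[of "cK l k"] by linarith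
      show ?thesis unfolding \<epsilon>_def using cpos by (simp add: field_simps)
    qed
    finally have "norm (a - cK l k * b) * N n / 2 \<le> S * norm (lam n - cK l k * mu n)" by simp
    then show ?thesis unfolding \<delta>_def using S0 by (simp add: field_simps)
  qed
  have "P * N n ^ l = (\<Prod>k<l. \<delta> k * N n)" unfolding P_def by (simp add: prod.distrib)
  also have "\<dots> \<le> (\<Prod>k<l. norm (lam n - cK l k * mu n))"
    using low \<delta>0 Npos by (intro prod_mono) (auto intro: less_imp_le)
  also have "\<dots> = norm (\<Prod>k<l. lam n - cK l k * mu n)" by (simp add: prod_norm)
  also have "\<dots> \<le> CP l * N n ^ (l - 1)"
    using P_bound[of "lam n" "mu n" l] N1 det0[of n] unfolding N_def by simp
  finally have ineq: "P * N n ^ l \<le> CP l * N n ^ (l - 1)" .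
  show False
  proof (cases l)
    case 0
    then show False using ineq P0 by (simp add: CP_zero)
  next
    case (Suc m)
    then have "P * N n * N n ^ m \<le> CP l * N n ^ m" using ineq by (simp add: algebra_simps)
    then have "P * N n \<le> CP l" using Npos by simp
    moreover have "CP l / P + 1 \<le> N n" using hN by simp
    then have "CP l + P \<le> P * N n" using P0 by (simp add: field_simps)
    ultimately show False using P0 by simp
  qed
qed

lemma pow_cancel:
  fixes s C :: real assumes "0 < s" shows "C * s ^ m / s ^ Suc m = C / s"
  using assms by (simp add: field_simps)

lemma sufficiency:
  assumes b: "b \<noteq> 0" and k: "k < l" and abk: "a / b = cK l k"
  shows "in_closure_at_infinity (Gamma l) a b"
proof -
  define c where "c = cK l k"
  have a: "a = c * b" using b abk by (simp add: field_simps c_def)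
  define C where "C = CP l * (norm c + 1)^(l-1)"
  have C0: "0 \<le> C" unfolding C_def using CP_nonneg by simp
  have l1: "1 \<le> l" using k by simp
  have ex: "\<forall>n. \<exists>r. det (H_mat l (of_nat (Suc n)) + r \<cdot>\<^sub>m 1\<^sub>m l) = 0 \<and>
      norm (c * of_nat (Suc n) - r) ^ l \<le> C * real (Suc n) ^ (l-1)"
  proof
    fix n
    define mu :: complex where "mu = of_nat (Suc n)"
    obtain rs where len: "length rs = l" and dH: "\<And>t. det (H_mat l mu + t \<cdot>\<^sub>m 1\<^sub>m l) = (\<Prod>r\<leftarrow>rs. t - r)"
      using det_H_factor by blast
    have "rs \<noteq> []" using len k by auto
    from prod_list_min[OF this, of "\<lambda>r. norm (c*mu - r)"] obtain r where r: "r \<in> set rs"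
      and rle: "norm (c*mu - r) ^ l \<le> prod_list (map (\<lambda>r. norm (c*mu - r)) rs)"
      using len by auto
    have d0: "det (H_mat l mu + r \<cdot>\<^sub>m 1\<^sub>m l) = 0"
      unfolding dH using r by (simp add: prod_list_zero_iff)
    have pn: "prod_list (map (\<lambda>r. norm (c*mu - r)) rs) = norm (det (H_mat l mu + (c*mu) \<cdot>\<^sub>m 1\<^sub>m l))"
      unfolding dH prod_list_norm ..
    have Fz: "(\<Prod>k'<l. c*mu - cK l k' * mu) = 0"
      using k unfolding c_def by (auto simp: prod_zero_iff)
    have nmu: "norm mu = real (Suc n)" unfolding mu_def by (simp only: norm_of_nat)
    have "norm (det (H_mat l mu + (c*mu) \<cdot>\<^sub>m 1\<^sub>m l))
        \<le> CP l * (norm (c*mu) + norm mu)^(l-1)"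
      using P_bound[of "c*mu" mu l, unfolded Fz] by (simp add: nmu)
    also have "(norm (c*mu) + norm mu)^(l-1) = (norm c + 1)^(l-1) * real (Suc n)^(l-1)"
      unfolding norm_mult nmu by (simp add: algebra_simps power_mult_distrib[symmetric])
    finally have "norm (c*mu - r) ^ l \<le> C * real (Suc n) ^ (l-1)"
      using rle pn unfolding C_def by (simp add: algebra_simps)
    then show "\<exists>r. det (H_mat l (of_nat (Suc n)) + r \<cdot>\<^sub>m 1\<^sub>m l) = 0 \<and>
      norm (c * of_nat (Suc n) - r) ^ l \<le> C * real (Suc n) ^ (l-1)"
      using d0 unfolding mu_def by blast
  qed
  from choice[OF ex] obtain rf where rf:
    "\<And>n. det (H_mat l (of_nat (Suc n)) + rf n \<cdot>\<^sub>m 1\<^sub>m l) = 0"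
    "\<And>n. norm (c * of_nat (Suc n) - rf n) ^ l \<le> C * real (Suc n) ^ (l-1)"
    by blast
  define x where "x n = (rf n, of_nat (Suc n) :: complex)" for n
  define e where "e n = norm (c * of_nat (Suc n) - rf n) / real (Suc n)" for n
  have e0: "e \<longlonglongrightarrow> 0"
  proof (rule tendstoI)
    fix \<epsilon> :: real assume ep: "0 < \<epsilon>"
    then have epl: "0 < \<epsilon> ^ l" by simp
    obtain M :: nat where M: "C / \<epsilon> ^ l < real M" using reals_Archimedean2 by blast
    have "e n < \<epsilon>" if n: "M \<le> n" for n
    proof -
      have "e n ^ l = norm (c * of_nat (Suc n) - rf n) ^ l / real (Suc n) ^ l"
        unfolding e_def by (simp add: power_divide)
      also have "\<dots> \<le> C * real (Suc n) ^ (l-1) / real (Suc n) ^ l"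
        using rf(2)[of n] by (intro divide_right_mono) auto
      also have "\<dots> = C / real (Suc n)"
        using l1 pow_cancel[of "real (Suc n)" C "l - 1"] by simp
      also have "\<dots> < \<epsilon> ^ l"
      proof -
        have "C / \<epsilon> ^ l < real (Suc n)" using M n by linarith
        then have "C < \<epsilon> ^ l * real (Suc n)" using epl by (simp add: field_simps)
        then show ?thesis by (simp add: field_simps)
      qed
      finally have "e n ^ l < \<epsilon> ^ l" .
      then show ?thesis by (rule power_less_imp_less_base) (use ep in simp)
    qed
    moreover have "0 \<le> e n" for n unfolding e_def by simp
    ultimately show "\<forall>\<^sub>F n in sequentially. dist (e n) 0 < \<epsilon>"
      unfolding eventually_sequentially dist_real_def by auto
  qed
  show ?thesis unfolding in_closure_at_infinity_def
  proof (intro exI[of _ x] conjI allI)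
    fix n show "x n \<in> Gamma l" using rf(1)[of n] unfolding x_def Gamma_def by simp
  next
    show "filterlim (\<lambda>n. cmod (fst (x n)) + cmod (snd (x n))) at_top sequentially"
    proof (rule filterlim_at_top_mono[OF filterlim_real_sequentially])
      show "\<forall>\<^sub>F n in sequentially. real n \<le> cmod (fst (x n)) + cmod (snd (x n))"
      proof (rule always_eventually, rule allI)
        fix n
        have nS: "norm (of_nat (Suc n) :: complex) = real (Suc n)" by (simp only: norm_of_nat)
        show "real n \<le> cmod (fst (x n)) + cmod (snd (x n))"
          unfolding x_def fst_conv snd_conv nS using norm_ge_zero[of "rf n"] by linarith
      qed
    qed
  next
    show "(\<lambda>n. (a * snd (x n) - b * fst (x n)) / complex_of_real (cmod (fst (x n)) + cmod (snd (x n)))) \<longlonglongrightarrow> 0"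
    proof (rule tendsto_0_le[where K = "norm b"])
      show "e \<longlonglongrightarrow> 0" by (rule e0)
      show "\<forall>\<^sub>F n in sequentially. norm ((a * snd (x n) - b * fst (x n)) / complex_of_real (cmod (fst (x n)) + cmod (snd (x n)))) \<le> norm (e n) * norm b"
      proof (rule always_eventually, rule allI)
        fix n
        have nS: "norm (of_nat (Suc n) :: complex) = real (Suc n)" by (simp only: norm_of_nat)
        define N where "N = norm (rf n) + real (Suc n)"
        have NS: "real (Suc n) \<le> N" unfolding N_def by simp
        have Npos: "0 < N" using NS by linarith
        have eq: "a * of_nat (Suc n) - b * rf n = b * (c * of_nat (Suc n) - rf n)" unfolding a by (simp add: algebra_simps)
        have "norm ((a * snd (x n) - b * fst (x n)) / complex_of_real (cmod (fst (x n)) + cmod (snd (x n))))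
            = norm (b * (c * of_nat (Suc n) - rf n) / complex_of_real N)"
          unfolding x_def fst_conv snd_conv nS N_def[symmetric] eq ..
        also have "\<dots> = norm b * norm (c * of_nat (Suc n) - rf n) / N"
          unfolding norm_divide norm_mult norm_of_real using Npos by simp
        also have "\<dots> \<le> norm b * norm (c * of_nat (Suc n) - rf n) / real (Suc n)"
          using NS by (intro divide_left_mono) auto
        also have "\<dots> = norm (e n) * norm b" unfolding e_def by simp
        finally show "norm ((a * snd (x n) - b * fst (x n)) / complex_of_real (cmod (fst (x n)) + cmod (snd (x n)))) \<le> norm (e n) * norm b" .
      qed
    qed
  qed
qed

theorem proposition1p10:
  fixes l :: nat
  shows "(\<forall>a b :: complex. (a, b) \<noteq> (0, 0) \<longrightarrow>
            (in_closure_at_infinity (Gamma l) a b \<longleftrightarrow>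
               b \<noteq> 0 \<and> (\<exists>k<l. a / b = of_int (int l - 1 - 2 * int k))))
         \<and> \<not> in_closure_at_infinity (Gamma l) 1 0"
proof -
  have main: "in_closure_at_infinity (Gamma l) a b \<longleftrightarrow> b \<noteq> 0 \<and> (\<exists>k<l. a / b = of_int (int l - 1 - 2 * int k))"
    if ab: "(a, b) \<noteq> (0, 0)" for a b :: complex
  proof
    assume "in_closure_at_infinity (Gamma l) a b"
    from necessity[OF ab this] F_zero_iff[OF ab]
    show "b \<noteq> 0 \<and> (\<exists>k<l. a / b = of_int (int l - 1 - 2 * int k))" by (simp add: cK_def)
  next
    assume "b \<noteq> 0 \<and> (\<exists>k<l. a / b = of_int (int l - 1 - 2 * int k))"
    then show "in_closure_at_infinity (Gamma l) a b"
      using sufficiency[of b _ l a] by (auto simp: cK_def)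
  qed
  show ?thesis using main[of 1 0] main by auto
qed

end
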